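(* Let $p_1,\dots,p_4\in\mathbb R^2$ be in general position. For $i\ne j$, define $$w_{ij}=\frac{1}{\det(p_i,p_j,p_k)\det(p_i,p_j,p_l)},$$ where $\{k,l\}=\{1,2,3,4\}\setminus\{i,j\}$, and define $\alpha_i=\sum_{j\ne i}w_{ij}|p_i-p_j|$. Then the $w_{ij}$ and $\alpha_i$ form a stress of the complete marked graph on the four points, with the following signs: - $w_{ij}>0$ if $p_ip_j$ is an edge of the boundary of $\operatorname{conv}\{p_1,\dots,p_4\}$, and $w_{ij}<0$ otherwise; - $\alpha_i>0$ if $p_i$ is a vertex of $\operatorname{conv}\{p_1,\dots,p_4\}$, and $\alpha_i<0$ if $p_i$ lies in its interior.
   Context: For $x,y,z\in\mathbb R^2$, $\det(x,y,z)$ is the determinant of the $3\times3$ matrix with columns $(x,1),(y,1),(z,1)$, i.e. twice the signed area of the triangle $xyz$. General position means no three of the points are collinear. A stress on a marked graph with edge set $E$ and marked vertex set $V$ is an assignment of scalars $w_{ij}$ ($ij\in E$) and $\alpha_i$ ($i\in V$) such that, for all $(v,t)\in(\mathbb R^2)^4\times\mathbb R^4$, $$\sum_{ij\in E}w_{ij}\big(\langle p_i-p_j,v_i-v_j\rangle-|p_i-p_j|(t_i+t_j)\big)+\sum_{i\in V}\alpha_it_i=0.$$ *)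

theory Defs
  imports "HOL-Analysis.Analysis"
begin

text \<open>det(x,y,z): determinant of the 3x3 matrix with columns (x,1),(y,1),(z,1),
  written out by cofactor expansion along the last row.\<close>
definition det3 :: "real^2 \<Rightarrow> real^2 \<Rightarrow> real^2 \<Rightarrow> real" where
  "det3 x y z = (x$1 * (y$2 - z$2) - y$1 * (x$2 - z$2) + z$1 * (x$2 - y$2))"

definition wt :: "(nat \<Rightarrow> real^2) \<Rightarrow> nat \<Rightarrow> nat \<Rightarrow> real" where
  "wt p i j = (let k = Min ({1..4} - {i, j}); l = Max ({1..4} - {i, j})
               in 1 / (det3 (p i) (p j) (p k) * det3 (p i) (p j) (p l)))"

definition alph :: "(nat \<Rightarrow> real^2) \<Rightarrow> nat \<Rightarrow> real" where
  "alph p i = (\<Sum>j\<in>{1..4} - {i}. wt p i j * norm (p i - p j))"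

text \<open>Stress on a marked graph with edge set E (pairs (i,j), each edge listed once)
  and marked vertex set V.\<close>
definition is_stress :: "(nat \<times> nat) set \<Rightarrow> nat set \<Rightarrow> (nat \<Rightarrow> real^2)
    \<Rightarrow> (nat \<Rightarrow> nat \<Rightarrow> real) \<Rightarrow> (nat \<Rightarrow> real) \<Rightarrow> bool" where
  "is_stress E V p w \<alpha> \<longleftrightarrow>
     (\<forall>(v :: nat \<Rightarrow> real^2) (t :: nat \<Rightarrow> real).
        (\<Sum>(i,j)\<in>E. w i j * (inner (p i - p j) (v i - v j) - norm (p i - p j) * (t i + t j)))
        + (\<Sum>i\<in>V. \<alpha> i * t i) = 0)"

end

theory Submission
  imports Defs
begin

lemma affdep:
  fixes a b c d :: "real^2"
  shows "det3 b c d *\<^sub>R a - det3 a c d *\<^sub>R b + det3 a b d *\<^sub>R c - det3 a b c *\<^sub>R d = 0"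
  by (simp add: vec_eq_iff forall_2 det3_def algebra_simps)

lemma vpart:
  fixes a b c d va vb vc vd :: "real^2"
  defines "la \<equiv> det3 b c d" and "lb \<equiv> - det3 a c d" and "lc \<equiv> det3 a b d" and "ld \<equiv> - det3 a b c"
  shows "la*lb* inner (a-b) (va-vb) + la*lc* inner (a-c) (va-vc) + la*ld* inner (a-d) (va-vd)
     + lb*lc* inner (b-c) (vb-vc) + lb*ld* inner (b-d) (vb-vd) + lc*ld* inner (c-d) (vc-vd) = 0"
proof -
  have s: "la + lb + lc + ld = 0" unfolding assms det3_def by (simp add: algebra_simps)
  have e: "la *\<^sub>R a + lb *\<^sub>R b + lc *\<^sub>R c + ld *\<^sub>R d = 0" unfolding assms
    by (simp add: vec_eq_iff forall_2 det3_def algebra_simps)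
  have ea: "lb *\<^sub>R (a-b) + lc *\<^sub>R (a-c) + ld *\<^sub>R (a-d) = 0"
  proof -
    have "lb *\<^sub>R (a-b) + lc *\<^sub>R (a-c) + ld *\<^sub>R (a-d) = (lb+lc+ld) *\<^sub>R a - (lb *\<^sub>R b + lc *\<^sub>R c + ld *\<^sub>R d)"
      by (simp add: algebra_simps)
    also have "lb+lc+ld = - la" using s by simp
    also have "lb *\<^sub>R b + lc *\<^sub>R c + ld *\<^sub>R d = - la *\<^sub>R a" using e by (simp add: algebra_simps eq_neg_iff_add_eq_0)
    finally show ?thesis by simp
  qed
  have eb: "la *\<^sub>R (b-a) + lc *\<^sub>R (b-c) + ld *\<^sub>R (b-d) = 0"
  proof -
    have "la *\<^sub>R (b-a) + lc *\<^sub>R (b-c) + ld *\<^sub>R (b-d) = (la+lc+ld) *\<^sub>R b - (la *\<^sub>R a + lc *\<^sub>R c + ld *\<^sub>R d)"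
      by (simp add: algebra_simps)
    also have "la+lc+ld = - lb" using s by simp
    also have "la *\<^sub>R a + lc *\<^sub>R c + ld *\<^sub>R d = - lb *\<^sub>R b" using e by (simp add: algebra_simps eq_neg_iff_add_eq_0)
    finally show ?thesis by simp
  qed
  have ec: "la *\<^sub>R (c-a) + lb *\<^sub>R (c-b) + ld *\<^sub>R (c-d) = 0"
  proof -
    have "la *\<^sub>R (c-a) + lb *\<^sub>R (c-b) + ld *\<^sub>R (c-d) = (la+lb+ld) *\<^sub>R c - (la *\<^sub>R a + lb *\<^sub>R b + ld *\<^sub>R d)"
      by (simp add: algebra_simps)
    also have "la+lb+ld = - lc" using s by simp
    also have "la *\<^sub>R a + lb *\<^sub>R b + ld *\<^sub>R d = - lc *\<^sub>R c" using e by (simp add: algebra_simps eq_neg_iff_add_eq_0)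
    finally show ?thesis by simp
  qed
  have ed: "la *\<^sub>R (d-a) + lb *\<^sub>R (d-b) + lc *\<^sub>R (d-c) = 0"
  proof -
    have "la *\<^sub>R (d-a) + lb *\<^sub>R (d-b) + lc *\<^sub>R (d-c) = (la+lb+lc) *\<^sub>R d - (la *\<^sub>R a + lb *\<^sub>R b + lc *\<^sub>R c)"
      by (simp add: algebra_simps)
    also have "la+lb+lc = - ld" using s by simp
    also have "la *\<^sub>R a + lb *\<^sub>R b + lc *\<^sub>R c = - ld *\<^sub>R d" using e by (simp add: algebra_simps eq_neg_iff_add_eq_0)
    finally show ?thesis by simp
  qed
  have "la*lb* inner (a-b) (va-vb) + la*lc* inner (a-c) (va-vc) + la*ld* inner (a-d) (va-vd)
     + lb*lc* inner (b-c) (vb-vc) + lb*ld* inner (b-d) (vb-vd) + lc*ld* inner (c-d) (vc-vd)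
     = la * inner va (lb *\<^sub>R (a-b) + lc *\<^sub>R (a-c) + ld *\<^sub>R (a-d))
     + lb * inner vb (la *\<^sub>R (b-a) + lc *\<^sub>R (b-c) + ld *\<^sub>R (b-d))
     + lc * inner vc (la *\<^sub>R (c-a) + lb *\<^sub>R (c-b) + ld *\<^sub>R (c-d))
     + ld * inner vd (la *\<^sub>R (d-a) + lb *\<^sub>R (d-b) + lc *\<^sub>R (d-c))"
    by (simp add: inner_vec_def sum_2 algebra_simps)
  then show ?thesis using ea eb ec ed by simp
qed
lemma det3_swap12: "det3 b a c = - det3 a b c" by (simp add: det3_def algebra_simps)
lemma det3_swap23: "det3 a c b = - det3 a b c" by (simp add: det3_def algebra_simps)

lemma det3_collinear:
  assumes "det3 a b c = 0" shows "collinear {a,b,c}"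
proof -
  have "collinear {0, a - b, c - b}"
    unfolding collinear_lemma
  proof (cases "a - b = 0 \<or> c - b = 0")
    case False
    define x where "x = a - b"
    define y where "y = c - b"
    have cr: "x$1 * y$2 - x$2 * y$1 = 0" using assms unfolding x_def y_def det3_def
      by (simp add: algebra_simps)
    have "x \<noteq> 0" using False x_def by auto
    then have "x$1 \<noteq> 0 \<or> x$2 \<noteq> 0" by (auto simp: vec_eq_iff forall_2)
    then have "\<exists>k. y = k *\<^sub>R x"
    proof
      assume h: "x$1 \<noteq> 0"
      show ?thesis
        apply (rule exI[of _ "y$1 / x$1"])
        using h cr by (auto simp: vec_eq_iff forall_2 field_simps)
    next
      assume h: "x$2 \<noteq> 0"
      show ?thesis
        apply (rule exI[of _ "y$2 / x$2"])
        using h cr by (auto simp: vec_eq_iff forall_2 field_simps)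
    qed
    then show "a - b = 0 \<or> c - b = 0 \<or> (\<exists>k. c - b = k *\<^sub>R (a - b))"
      using x_def y_def by auto
  qed auto
  then show ?thesis
    using collinear_3[of a b c] by simp
qed

lemma det3_cyc: "det3 b c a = det3 a b c" by (simp add: det3_def algebra_simps)

lemma stress_generic:
  fixes a b c d va vb vc vd :: "real^2" and ta tb tc td :: real
  assumes nz: "det3 a b c \<noteq> 0" "det3 a b d \<noteq> 0" "det3 a c d \<noteq> 0" "det3 b c d \<noteq> 0"
  defines "wab \<equiv> 1/(det3 a b c * det3 a b d)" and "wac \<equiv> 1/(det3 a c b * det3 a c d)"
    and "wad \<equiv> 1/(det3 a d b * det3 a d c)" and "wbc \<equiv> 1/(det3 b c a * det3 b c d)"
    and "wbd \<equiv> 1/(det3 b d a * det3 b d c)" and "wcd \<equiv> 1/(det3 c d a * det3 c d b)"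
  shows "wab*(inner (a-b) (va-vb) - norm(a-b)*(ta+tb)) + wac*(inner (a-c) (va-vc) - norm(a-c)*(ta+tc))
     + wad*(inner (a-d) (va-vd) - norm(a-d)*(ta+td)) + wbc*(inner (b-c) (vb-vc) - norm(b-c)*(tb+tc))
     + wbd*(inner (b-d) (vb-vd) - norm(b-d)*(tb+td)) + wcd*(inner (c-d) (vc-vd) - norm(c-d)*(tc+td))
     + ((wab*norm(a-b) + wac*norm(a-c) + wad*norm(a-d))*ta
       + (wab*norm(b-a) + wbc*norm(b-c) + wbd*norm(b-d))*tb
       + (wac*norm(c-a) + wbc*norm(c-b) + wcd*norm(c-d))*tc
       + (wad*norm(d-a) + wbd*norm(d-b) + wcd*norm(d-c))*td) = 0"
proof -
  define la where "la = det3 b c d"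
  define lb where "lb = - det3 a c d"
  define lc where "lc = det3 a b d"
  define ld where "ld = - det3 a b c"
  have nz': "la \<noteq> 0" "lb \<noteq> 0" "lc \<noteq> 0" "ld \<noteq> 0" using nz la_def lb_def lc_def ld_def by auto
  define P where "P = la*lb*lc*ld"
  have P: "P \<noteq> 0" using nz' P_def by simp
  have D: "det3 a b c = - ld" "det3 a b d = lc" "det3 a c d = - lb" "det3 b c d = la"
    "det3 a c b = ld" "det3 a d b = - lc" "det3 a d c = lb" "det3 b c a = - ld"
    "det3 b d a = lc" "det3 b d c = - la" "det3 c d a = - lb" "det3 c d b = la"
    unfolding la_def lb_def lc_def ld_def by (simp_all add: det3_def algebra_simps)
  have W: "wab = - (la*lb)/P" "wac = - (la*lc)/P" "wad = - (la*ld)/P"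
    "wbc = - (lb*lc)/P" "wbd = - (lb*ld)/P" "wcd = - (lc*ld)/P"
    unfolding assms D P_def using nz' by (simp_all add: field_simps)
  have V: "la*lb* inner (a-b) (va-vb) + la*lc* inner (a-c) (va-vc) + la*ld* inner (a-d) (va-vd)
     + lb*lc* inner (b-c) (vb-vc) + lb*ld* inner (b-d) (vb-vd) + lc*ld* inner (c-d) (vc-vd) = 0"
    unfolding la_def lb_def lc_def ld_def by (rule vpart)
  have n: "norm (b-a) = norm(a-b)" "norm (c-a) = norm(a-c)" "norm (d-a) = norm(a-d)"
    "norm (c-b) = norm(b-c)" "norm (d-b) = norm(b-d)" "norm (d-c) = norm(c-d)"
    by (simp_all add: norm_minus_commute)
  have "wab*inner (a-b) (va-vb) + wac*inner (a-c) (va-vc) + wad*inner (a-d) (va-vd)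
     + wbc*inner (b-c) (vb-vc) + wbd*inner (b-d) (vb-vd) + wcd*inner (c-d) (vc-vd)
    = - (la*lb* inner (a-b) (va-vb) + la*lc* inner (a-c) (va-vc) + la*ld* inner (a-d) (va-vd)
     + lb*lc* inner (b-c) (vb-vc) + lb*ld* inner (b-d) (vb-vd) + lc*ld* inner (c-d) (vc-vd)) / P"
    unfolding W using P by (simp add: field_simps)
  also have "\<dots> = 0" using V by simp
  finally have VV: "wab*inner (a-b) (va-vb) + wac*inner (a-c) (va-vc) + wad*inner (a-d) (va-vd)
     + wbc*inner (b-c) (vb-vc) + wbd*inner (b-d) (vb-vd) + wcd*inner (c-d) (vc-vd) = 0" .
  show ?thesis unfolding n using VV by (simp add: algebra_simps)
qed

lemma det3_same_zero: "det3 a a c = 0" "det3 a c a = 0" "det3 c a a = 0"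
  by (simp_all add: det3_def algebra_simps)

lemma tri_strict:
  fixes x y z :: "real^2"
  assumes s: "x + y + z = 0" and cr: "x$1 * y$2 - x$2 * y$1 \<noteq> 0"
  shows "norm z < norm x + norm y"
proof -
  have "z = (x + y + z) - (x + y)" by simp
  then have z: "z = - (x + y)" using s by simp
  have lag: "(norm x)^2 * (norm y)^2 = (inner x y)^2 + (x$1 * y$2 - x$2 * y$1)^2"
    unfolding power2_norm_eq_inner by (simp add: inner_vec_def sum_2 power2_eq_square algebra_simps)
  have "(inner x y)^2 < (norm x * norm y)^2" using lag cr by (simp add: power_mult_distrib)
  then have "\<bar>inner x y\<bar>^2 < (norm x * norm y)^2" by simp
  then have "\<bar>inner x y\<bar> < norm x * norm y"
    by (rule power_less_imp_less_base) simp
  then have xy: "inner x y < norm x * norm y" by linarith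
  have "(norm (x+y))^2 = (norm x)^2 + (norm y)^2 + 2 * inner x y"
    unfolding power2_norm_eq_inner by (simp add: inner_add_left inner_add_right inner_commute)
  also have "\<dots> < (norm x + norm y)^2" using xy by (simp add: power2_eq_square algebra_simps)
  finally have "norm (x+y) < norm x + norm y"
    using power_less_imp_less_base by (metis add_nonneg_nonneg norm_ge_zero)
  then show ?thesis unfolding z norm_minus_cancel .
qed

lemma sgn_cases:
  fixes X Y Z lb lc ld :: real
  assumes t: "\<bar>Z\<bar> < \<bar>X\<bar> + \<bar>Y\<bar>" "\<bar>Y\<bar> < \<bar>X\<bar> + \<bar>Z\<bar>" "\<bar>X\<bar> < \<bar>Y\<bar> + \<bar>Z\<bar>"
    and s: "X > 0 \<longleftrightarrow> lb > 0" "X < 0 \<longleftrightarrow> lb < 0" "Y > 0 \<longleftrightarrow> lc > 0" "Y < 0 \<longleftrightarrow> lc < 0"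
     "Z > 0 \<longleftrightarrow> ld > 0" "Z < 0 \<longleftrightarrow> ld < 0"
    and nz: "lb \<noteq> 0" "lc \<noteq> 0" "ld \<noteq> 0"
  shows "((lb > 0 \<and> lc > 0 \<and> ld > 0) \<or> (lb < 0 \<and> lc < 0 \<and> ld < 0)) \<longrightarrow> - (X+Y+Z) / (lb*lc*ld) < 0"
    and "\<not> ((lb > 0 \<and> lc > 0 \<and> ld > 0) \<or> (lb < 0 \<and> lc < 0 \<and> ld < 0)) \<longrightarrow> - (X+Y+Z) / (lb*lc*ld) > 0"
proof -
  have A: "\<And>ss qq::real. ss > 0 \<Longrightarrow> qq < 0 \<Longrightarrow> -ss/qq > 0" "\<And>ss qq::real. ss>0 \<Longrightarrow> qq>0 \<Longrightarrow> -ss/qq<0"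
     "\<And>ss qq::real. ss<0 \<Longrightarrow> qq<0 \<Longrightarrow> -ss/qq<0" "\<And>ss qq::real. ss<0 \<Longrightarrow> qq>0 \<Longrightarrow> -ss/qq>0"
    by (simp_all add: divide_pos_neg divide_neg_neg divide_pos_pos divide_neg_pos)
  have B: "\<And>u v w::real. u>0 \<Longrightarrow> v>0 \<Longrightarrow> w>0 \<Longrightarrow> u * v * w>0"
     "\<And>u v w::real. u>0 \<Longrightarrow> v>0 \<Longrightarrow> w<0 \<Longrightarrow> u * v * w<0"
     "\<And>u v w::real. u>0 \<Longrightarrow> v<0 \<Longrightarrow> w>0 \<Longrightarrow> u * v * w<0"
     "\<And>u v w::real. u<0 \<Longrightarrow> v>0 \<Longrightarrow> w>0 \<Longrightarrow> u * v * w<0"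
     "\<And>u v w::real. u>0 \<Longrightarrow> v<0 \<Longrightarrow> w<0 \<Longrightarrow> u * v * w>0"
     "\<And>u v w::real. u<0 \<Longrightarrow> v>0 \<Longrightarrow> w<0 \<Longrightarrow> u * v * w>0"
     "\<And>u v w::real. u<0 \<Longrightarrow> v<0 \<Longrightarrow> w>0 \<Longrightarrow> u * v * w>0"
     "\<And>u v w::real. u<0 \<Longrightarrow> v<0 \<Longrightarrow> w<0 \<Longrightarrow> u * v * w<0"
    by (simp_all add: mult_pos_pos mult_pos_neg mult_neg_pos mult_neg_neg)
  have lb: "lb > 0 \<or> lb < 0" and lc: "lc > 0 \<or> lc < 0" and ld: "ld > 0 \<or> ld < 0" using nz by auto
  show "((lb > 0 \<and> lc > 0 \<and> ld > 0) \<or> (lb < 0 \<and> lc < 0 \<and> ld < 0)) \<longrightarrow> - (X+Y+Z) / (lb*lc*ld) < 0"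
  proof
    assume "(lb > 0 \<and> lc > 0 \<and> ld > 0) \<or> (lb < 0 \<and> lc < 0 \<and> ld < 0)"
    then show "- (X+Y+Z) / (lb*lc*ld) < 0"
    proof
      assume h: "lb > 0 \<and> lc > 0 \<and> ld > 0"
      then have "X > 0" "Y > 0" "Z > 0" using s by simp_all
      then have S: "X+Y+Z > 0" by linarith
      have "lb*lc*ld > 0" by (rule B(1)) (use h in simp_all)
      then show ?thesis by (rule A(2)[OF S])
    next
      assume h: "lb < 0 \<and> lc < 0 \<and> ld < 0"
      then have "X < 0" "Y < 0" "Z < 0" using s by simp_all
      then have S: "X+Y+Z < 0" by linarith
      have "lb*lc*ld < 0" by (rule B(8)) (use h in simp_all)
      then show ?thesis by (rule A(3)[OF S])
    qed
  qed
  show "\<not> ((lb > 0 \<and> lc > 0 \<and> ld > 0) \<or> (lb < 0 \<and> lc < 0 \<and> ld < 0)) \<longrightarrow> - (X+Y+Z) / (lb*lc*ld) > 0"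
  proof
    assume n: "\<not> ((lb > 0 \<and> lc > 0 \<and> ld > 0) \<or> (lb < 0 \<and> lc < 0 \<and> ld < 0))"
    consider "lb>0" "lc>0" "ld<0" | "lb>0" "lc<0" "ld>0" | "lb<0" "lc>0" "ld>0"
      | "lb<0" "lc<0" "ld>0" | "lb<0" "lc>0" "ld<0" | "lb>0" "lc<0" "ld<0"
      using n lb lc ld by blast
    then show "- (X+Y+Z) / (lb*lc*ld) > 0"
    proof cases
      case 1
      then have h: "X > 0" "Y > 0" "Z < 0" using s by simp_all
      then have "\<bar>X\<bar> = X" "\<bar>Y\<bar> = Y" "\<bar>Z\<bar> = - Z" by simp_all
      then have S: "X+Y+Z > 0" using t by linarith
      have "lb*lc*ld < 0" by (rule B(2)) (use 1 in simp_all)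
      then show ?thesis by (rule A(1)[OF S])
    next
      case 2
      then have h: "X > 0" "Y < 0" "Z > 0" using s by simp_all
      then have "\<bar>X\<bar> = X" "\<bar>Y\<bar> = - Y" "\<bar>Z\<bar> = Z" by simp_all
      then have S: "X+Y+Z > 0" using t by linarith
      have "lb*lc*ld < 0" by (rule B(3)) (use 2 in simp_all)
      then show ?thesis by (rule A(1)[OF S])
    next
      case 3
      then have h: "X < 0" "Y > 0" "Z > 0" using s by simp_all
      then have "\<bar>X\<bar> = - X" "\<bar>Y\<bar> = Y" "\<bar>Z\<bar> = Z" by simp_all
      then have S: "X+Y+Z > 0" using t by linarith
      have "lb*lc*ld < 0" by (rule B(4)) (use 3 in simp_all)
      then show ?thesis by (rule A(1)[OF S])
    next
      case 4
      then have h: "X < 0" "Y < 0" "Z > 0" using s by simp_all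
      then have "\<bar>X\<bar> = - X" "\<bar>Y\<bar> = - Y" "\<bar>Z\<bar> = Z" by simp_all
      then have S: "X+Y+Z < 0" using t by linarith
      have "lb*lc*ld > 0" by (rule B(7)) (use 4 in simp_all)
      then show ?thesis by (rule A(4)[OF S])
    next
      case 5
      then have h: "X < 0" "Y > 0" "Z < 0" using s by simp_all
      then have "\<bar>X\<bar> = - X" "\<bar>Y\<bar> = Y" "\<bar>Z\<bar> = - Z" by simp_all
      then have S: "X+Y+Z < 0" using t by linarith
      have "lb*lc*ld > 0" by (rule B(6)) (use 5 in simp_all)
      then show ?thesis by (rule A(4)[OF S])
    next
      case 6
      then have h: "X > 0" "Y < 0" "Z < 0" using s by simp_all
      then have "\<bar>X\<bar> = X" "\<bar>Y\<bar> = - Y" "\<bar>Z\<bar> = - Z" by simp_all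
      then have S: "X+Y+Z < 0" using t by linarith
      have "lb*lc*ld > 0" by (rule B(5)) (use 6 in simp_all)
      then show ?thesis by (rule A(4)[OF S])
    qed
  qed
qed
lemma sign_lemma:
  fixes lb lc ld nb nc nd :: real
  assumes nz: "lb \<noteq> 0" "lc \<noteq> 0" "ld \<noteq> 0" and pos: "nb > 0" "nc > 0" "nd > 0"
    and t1: "\<bar>ld\<bar>*nd < \<bar>lb\<bar>*nb + \<bar>lc\<bar>*nc"
    and t2: "\<bar>lc\<bar>*nc < \<bar>lb\<bar>*nb + \<bar>ld\<bar>*nd"
    and t3: "\<bar>lb\<bar>*nb < \<bar>lc\<bar>*nc + \<bar>ld\<bar>*nd"
  shows "((lb > 0 \<and> lc > 0 \<and> ld > 0) \<or> (lb < 0 \<and> lc < 0 \<and> ld < 0))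
           \<longleftrightarrow> - (lb*nb + lc*nc + ld*nd) / (lb*lc*ld) < 0"
    and "\<not> ((lb > 0 \<and> lc > 0 \<and> ld > 0) \<or> (lb < 0 \<and> lc < 0 \<and> ld < 0))
           \<longleftrightarrow> - (lb*nb + lc*nc + ld*nd) / (lb*lc*ld) > 0"
proof -
  define X where "X = lb*nb"
  define Y where "Y = lc*nc"
  define Z where "Z = ld*nd"
  have aX: "\<bar>X\<bar> = \<bar>lb\<bar>*nb" "\<bar>Y\<bar> = \<bar>lc\<bar>*nc" "\<bar>Z\<bar> = \<bar>ld\<bar>*nd"
    using pos by (simp_all add: X_def Y_def Z_def abs_mult)
  have sX: "X > 0 \<longleftrightarrow> lb > 0" "X < 0 \<longleftrightarrow> lb < 0" "Y > 0 \<longleftrightarrow> lc > 0" "Y < 0 \<longleftrightarrow> lc < 0"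
     "Z > 0 \<longleftrightarrow> ld > 0" "Z < 0 \<longleftrightarrow> ld < 0"
    using pos by (simp_all add: X_def Y_def Z_def zero_less_mult_iff mult_less_0_iff)
  have t: "\<bar>Z\<bar> < \<bar>X\<bar> + \<bar>Y\<bar>" "\<bar>Y\<bar> < \<bar>X\<bar> + \<bar>Z\<bar>" "\<bar>X\<bar> < \<bar>Y\<bar> + \<bar>Z\<bar>"
    unfolding aX using t1 t2 t3 by simp_all
  note C = sgn_cases[OF t sX nz]
  define A where "A \<longleftrightarrow> ((lb > 0 \<and> lc > 0 \<and> ld > 0) \<or> (lb < 0 \<and> lc < 0 \<and> ld < 0))"
  define q where "q = - (X+Y+Z) / (lb*lc*ld)"
  have C1: "A \<Longrightarrow> q < 0" and C2: "\<not> A \<Longrightarrow> q > 0" using C unfolding A_def q_def by blast+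
  have qq: "- (lb*nb + lc*nc + ld*nd) / (lb*lc*ld) = q" by (simp add: X_def Y_def Z_def q_def)
  have "A \<longleftrightarrow> q < 0" using C1 C2 by force
  moreover have "\<not> A \<longleftrightarrow> q > 0" using C1 C2 by force
  ultimately show "((lb > 0 \<and> lc > 0 \<and> ld > 0) \<or> (lb < 0 \<and> lc < 0 \<and> ld < 0))
           \<longleftrightarrow> - (lb*nb + lc*nc + ld*nd) / (lb*lc*ld) < 0"
    and "\<not> ((lb > 0 \<and> lc > 0 \<and> ld > 0) \<or> (lb < 0 \<and> lc < 0 \<and> ld < 0))
           \<longleftrightarrow> - (lb*nb + lc*nc + ld*nd) / (lb*lc*ld) > 0"
    unfolding qq A_def by simp_all
qed

lemma det3_aff3: "det3 a b ((1-t) *\<^sub>R c + t *\<^sub>R d) = (1-t)*det3 a b c + t*det3 a b d"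
  by (simp add: det3_def algebra_simps)

lemma det3_line: "det3 a b (u *\<^sub>R a + (1-u) *\<^sub>R b) = 0"
  by (simp add: det3_def algebra_simps)

lemma distinct_of_det:
  fixes a b c d :: "real^2"
  assumes nz: "det3 a b c \<noteq> 0" "det3 a b d \<noteq> 0" "det3 a c d \<noteq> 0" "det3 b c d \<noteq> 0"
  shows "a \<noteq> b" "a \<noteq> c" "a \<noteq> d" "b \<noteq> c" "b \<noteq> d" "c \<noteq> d"
  using nz det3_same_zero by auto

lemma face_generic:
  fixes a b c d :: "real^2"
  assumes nz: "det3 a b c \<noteq> 0" "det3 a b d \<noteq> 0" "det3 a c d \<noteq> 0" "det3 b c d \<noteq> 0"
  shows "closed_segment a b face_of convex hull {a,b,c,d} \<longleftrightarrow> det3 a b c * det3 a b d > 0"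
proof
  note dd = distinct_of_det[OF nz]
  assume F: "closed_segment a b face_of convex hull {a,b,c,d}"
  show "det3 a b c * det3 a b d > 0"
  proof (rule ccontr)
    assume "\<not> det3 a b c * det3 a b d > 0"
    moreover have "det3 a b c * det3 a b d \<noteq> 0" using nz by simp
    ultimately have neg: "det3 a b c * det3 a b d < 0" by linarith
    define X where "X = det3 a b c"
    define Y where "Y = det3 a b d"
    have XY: "X * Y < 0" using neg X_def Y_def by simp
    then have "X \<noteq> Y" by auto
    define t where "t = X / (X - Y)"
    have t01: "0 < t" "t < 1"
    proof -
      have "(X > 0 \<and> Y < 0) \<or> (X < 0 \<and> Y > 0)" using XY by (auto simp: mult_less_0_iff)
      then show "0 < t" "t < 1" unfolding t_def by (auto simp: field_simps)
    qed
    define q where "q = (1-t) *\<^sub>R c + t *\<^sub>R d"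
    have "det3 a b q = (1-t)*X + t*Y" unfolding q_def X_def Y_def by (rule det3_aff3)
    also have "\<dots> = X - t * (X - Y)" by (simp add: algebra_simps)
    also have "\<dots> = 0" unfolding t_def using \<open>X \<noteq> Y\<close> by simp
    finally have "det3 a b q = 0" .
    then have "collinear {a,b,q}" by (rule det3_collinear)
    then have qaff: "q \<in> affine hull {a,b}" using collinear_3_affine_hull dd(1) by blast
    have "q \<in> closed_segment c d" unfolding q_def in_segment using t01 by (intro exI[of _ t]) simp
    moreover have "closed_segment c d \<subseteq> convex hull {a,b,c,d}"
      by (rule closed_segment_subset) (auto intro: hull_inc)
    ultimately have qS: "q \<in> convex hull {a,b,c,d}" by blast
    have "closed_segment a b = affine hull (closed_segment a b) \<inter> convex hull {a,b,c,d}"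
      by (rule face_of_imp_eq_affine_Int[OF convex_convex_hull F])
    moreover have "affine hull (closed_segment a b) = affine hull {a,b}"
      by (simp add: segment_convex_hull affine_hull_convex_hull)
    ultimately have qT: "q \<in> closed_segment a b" using qaff qS by blast
    have qo: "q \<in> open_segment c d" unfolding q_def in_segment using t01 dd(6) by (intro conjI exI[of _ t]) simp_all
    have cS: "c \<in> convex hull {a,b,c,d}" "d \<in> convex hull {a,b,c,d}" by (auto intro: hull_inc)
    have "c \<in> closed_segment a b" using F cS qo qT unfolding face_of_def by blast
    then obtain s where "c = (1-s) *\<^sub>R a + s *\<^sub>R b" by (auto simp: in_segment)
    then have "det3 a b c = 0" using det3_line[of a b "1-s"] by simp
    then show False using nz by simp
  qed
next
  note dd = distinct_of_det[OF nz]
  assume pos: "det3 a b c * det3 a b d > 0"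
  have cs: "closed_segment a b = convex hull {a,b}" by (rule segment_convex_hull)
  have diff: "{a,b,c,d} - {a,b} = {c,d}" using dd by auto
  have disj: "affine hull {a,b} \<inter> convex hull ({a,b,c,d} - {a,b}) = {}"
  proof (rule ccontr)
    assume "affine hull {a,b} \<inter> convex hull ({a,b,c,d} - {a,b}) \<noteq> {}"
    then obtain x where x1: "x \<in> affine hull {a,b}" and x2: "x \<in> closed_segment c d"
      unfolding diff segment_convex_hull by blast
    from x1 obtain u v where "x = u *\<^sub>R a + v *\<^sub>R b" "u + v = 1" by (auto simp: affine_hull_2)
    then have "x = u *\<^sub>R a + (1-u) *\<^sub>R b" by (metis add_diff_cancel_left')
    then have z: "det3 a b x = 0" using det3_line by simp
    from x2 obtain t where t: "0 \<le> t" "t \<le> 1" "x = (1-t) *\<^sub>R c + t *\<^sub>R d" by (auto simp: in_segment)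
    then have "det3 a b x = (1-t)*det3 a b c + t*det3 a b d" using det3_aff3 by simp
    moreover have "(1-t)*det3 a b c + t*det3 a b d \<noteq> 0"
    proof -
      have "(det3 a b c > 0 \<and> det3 a b d > 0) \<or> (det3 a b c < 0 \<and> det3 a b d < 0)"
        using pos by (auto simp: zero_less_mult_iff)
      then show ?thesis
      proof
        assume h: "det3 a b c > 0 \<and> det3 a b d > 0"
        have "(1-t)*det3 a b c \<ge> 0" "t*det3 a b d \<ge> 0" using h t by simp_all
        moreover have "(1-t)*det3 a b c > 0 \<or> t*det3 a b d > 0" using h t
          by (cases "t = 1") simp_all
        ultimately show ?thesis by linarith
      next
        assume h: "det3 a b c < 0 \<and> det3 a b d < 0"
        have "(1-t)*det3 a b c \<le> 0" "t*det3 a b d \<le> 0" using h t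
          by (simp_all add: mult_nonneg_nonpos)
        moreover have "(1-t)*det3 a b c < 0 \<or> t*det3 a b d < 0" using h t
          by (cases "t = 1") (simp_all add: mult_pos_neg)
        ultimately show ?thesis by linarith
      qed
    qed
    ultimately show False using z by simp
  qed
  show "closed_segment a b face_of convex hull {a,b,c,d}"
    unfolding cs by (rule face_of_convex_hulls) (use disj in auto)
qed

lemma det3_comb:
  fixes b c d :: "real^2"
  assumes "u + v + w = 1"
  shows "det3 (u *\<^sub>R b + v *\<^sub>R c + w *\<^sub>R d) c d = u * det3 b c d"
    and "det3 (u *\<^sub>R b + v *\<^sub>R c + w *\<^sub>R d) b d = v * det3 c b d"
    and "det3 (u *\<^sub>R b + v *\<^sub>R c + w *\<^sub>R d) b c = w * det3 d b c"
proof -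
  have w: "w = 1 - u - v" using assms by simp
  show "det3 (u *\<^sub>R b + v *\<^sub>R c + w *\<^sub>R d) c d = u * det3 b c d"
    "det3 (u *\<^sub>R b + v *\<^sub>R c + w *\<^sub>R d) b d = v * det3 c b d"
    "det3 (u *\<^sub>R b + v *\<^sub>R c + w *\<^sub>R d) b c = w * det3 d b c"
    unfolding w by (simp_all add: det3_def algebra_simps)
qed

lemma G1:
  fixes a b c d :: "real^2"
  assumes nz: "det3 a b c \<noteq> 0" "det3 a b d \<noteq> 0" "det3 a c d \<noteq> 0" "det3 b c d \<noteq> 0"
    and h: "a \<in> convex hull {b,c,d}"
  shows "(- det3 a c d > 0 \<and> det3 a b d > 0 \<and> - det3 a b c > 0)
       \<or> (- det3 a c d < 0 \<and> det3 a b d < 0 \<and> - det3 a b c < 0)"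
proof -
  from h obtain u v w where uvw: "0 \<le> u" "0 \<le> v" "0 \<le> w" "u + v + w = 1"
    and a: "a = u *\<^sub>R b + v *\<^sub>R c + w *\<^sub>R d"
    unfolding convex_hull_3 by blast
  define la where "la = det3 b c d"
  have e1: "- det3 a c d = - (u * la)" unfolding a la_def using det3_comb(1)[OF uvw(4)] by simp
  have e2: "det3 a b d = - (v * la)" unfolding a la_def using det3_comb(2)[OF uvw(4)]
    using det3_swap12[where a=b and b=c and c=d] by simp
  have e3: "- det3 a b c = - (w * la)" unfolding a la_def using det3_comb(3)[OF uvw(4)] det3_cyc[where a=d and b=b and c=c] det3_cyc[where a=b and b=c and c=d]
    by simp
  have "la \<noteq> 0" using nz la_def by simp
  have "u * la \<noteq> 0" using e1 nz(3) by linarith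
  then have "u \<noteq> 0" by simp
  have "v * la \<noteq> 0" using e2 nz(2) by linarith
  then have "v \<noteq> 0" by simp
  have "w * la \<noteq> 0" using e3 nz(1) by linarith
  then have "w \<noteq> 0" by simp
  have p: "u > 0" "v > 0" "w > 0" using uvw \<open>u \<noteq> 0\<close> \<open>v \<noteq> 0\<close> \<open>w \<noteq> 0\<close> by linarith+
  have "la > 0 \<or> la < 0" using \<open>la \<noteq> 0\<close> by linarith
  then show ?thesis
  proof
    assume l: "la > 0"
    have "u * la > 0" "v * la > 0" "w * la > 0" using p l by (simp_all add: mult_pos_pos)
    then show ?thesis unfolding e1 e2 e3 by linarith
  next
    assume l: "la < 0"
    have "u * la < 0" "v * la < 0" "w * la < 0" using p l by (simp_all add: mult_pos_neg)
    then show ?thesis unfolding e1 e2 e3 by linarith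
  qed
qed

lemma G2:
  fixes a b c d :: "real^2"
  assumes h: "(- det3 a c d > 0 \<and> det3 a b d > 0 \<and> - det3 a b c > 0)
       \<or> (- det3 a c d < 0 \<and> det3 a b d < 0 \<and> - det3 a b c < 0)"
  shows "a \<in> convex hull {b,c,d}"
proof -
  define la where "la = det3 b c d"
  define lb where "lb = - det3 a c d"
  define lc where "lc = det3 a b d"
  define ld where "ld = - det3 a b c"
  have e: "la *\<^sub>R a + lb *\<^sub>R b + lc *\<^sub>R c + ld *\<^sub>R d = 0"
    unfolding la_def lb_def lc_def ld_def by (simp add: vec_eq_iff forall_2 det3_def algebra_simps)
  have sum: "la + lb + lc + ld = 0" unfolding la_def lb_def lc_def ld_def by (simp add: det3_def algebra_simps)
  define s where "s = lb + lc + ld"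
  have hh: "(lb > 0 \<and> lc > 0 \<and> ld > 0) \<or> (lb < 0 \<and> lc < 0 \<and> ld < 0)"
    using h lb_def lc_def ld_def by simp
  then have s0: "s \<noteq> 0" unfolding s_def by linarith
  have la: "la = - s" using sum s_def by simp
  have comb: "lb *\<^sub>R b + lc *\<^sub>R c + ld *\<^sub>R d = s *\<^sub>R a"
  proof -
    have "la *\<^sub>R a + (lb *\<^sub>R b + lc *\<^sub>R c + ld *\<^sub>R d) = 0" using e by (simp add: add.assoc)
    then show ?thesis unfolding la by (simp add: add_eq_0_iff2 eq_neg_iff_add_eq_0 add.commute)
  qed
  define u where "u = lb / s"
  define v where "v = lc / s"
  define w where "w = ld / s"
  have nn: "0 \<le> u" "0 \<le> v" "0 \<le> w"
  proof -
    have "(lb > 0 \<and> lc > 0 \<and> ld > 0 \<and> s > 0) \<or> (lb < 0 \<and> lc < 0 \<and> ld < 0 \<and> s < 0)"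
      using hh s_def by linarith
    then show "0 \<le> u" "0 \<le> v" "0 \<le> w" unfolding u_def v_def w_def
      by (metis divide_pos_pos divide_neg_neg less_imp_le)+
  qed
  have "u + v + w = (lb + lc + ld) / s" unfolding u_def v_def w_def by (simp add: add_divide_distrib)
  then have one: "u + v + w = 1" using s0 s_def by simp
  have "u *\<^sub>R b + v *\<^sub>R c + w *\<^sub>R d = (1/s) *\<^sub>R (lb *\<^sub>R b + lc *\<^sub>R c + ld *\<^sub>R d)"
    unfolding u_def v_def w_def by (simp add: scaleR_add_right)
  also have "\<dots> = a" unfolding comb using s0 by simp
  finally have "a = u *\<^sub>R b + v *\<^sub>R c + w *\<^sub>R d" by simp
  then show ?thesis unfolding convex_hull_3 using nn one by blast
qed

lemma alpha_generic:
  fixes a b c d :: "real^2"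
  assumes nz: "det3 a b c \<noteq> 0" "det3 a b d \<noteq> 0" "det3 a c d \<noteq> 0" "det3 b c d \<noteq> 0"
  defines "\<alpha> \<equiv> 1/(det3 a b c * det3 a b d) * norm (a-b) + 1/(det3 a c b * det3 a c d) * norm (a-c)
     + 1/(det3 a d b * det3 a d c) * norm (a-d)"
  shows "(a extreme_point_of convex hull {a,b,c,d} \<longrightarrow> \<alpha> > 0)
    \<and> (a \<in> interior (convex hull {a,b,c,d}) \<longrightarrow> \<alpha> < 0)"
proof -
  note dd = distinct_of_det[OF nz]
  define la where "la = det3 b c d"
  define lb where "lb = - det3 a c d"
  define lc where "lc = det3 a b d"
  define ld where "ld = - det3 a b c"
  have nz': "la \<noteq> 0" "lb \<noteq> 0" "lc \<noteq> 0" "ld \<noteq> 0" using nz la_def lb_def lc_def ld_def by auto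
  have D: "det3 a b c = - ld" "det3 a b d = lc" "det3 a c d = - lb"
    "det3 a c b = ld" "det3 a d b = - lc" "det3 a d c = lb"
    unfolding la_def lb_def lc_def ld_def by (simp_all add: det3_def algebra_simps)
  define nb where "nb = norm (a-b)"
  define nc where "nc = norm (a-c)"
  define nd where "nd = norm (a-d)"
  have npos: "nb > 0" "nc > 0" "nd > 0" using dd unfolding nb_def nc_def nd_def by auto
  have al: "\<alpha> = - (lb*nb + lc*nc + ld*nd) / (lb*lc*ld)"
    unfolding \<alpha>_def D nb_def[symmetric] nc_def[symmetric] nd_def[symmetric] using nz'
    by (simp add: field_simps)
  have e: "la *\<^sub>R a + lb *\<^sub>R b + lc *\<^sub>R c + ld *\<^sub>R d = 0"
    unfolding la_def lb_def lc_def ld_def by (simp add: vec_eq_iff forall_2 det3_def algebra_simps)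
  have sum: "la + lb + lc + ld = 0" unfolding la_def lb_def lc_def ld_def by (simp add: det3_def algebra_simps)
  define x where "x = lb *\<^sub>R (b - a)"
  define y where "y = lc *\<^sub>R (c - a)"
  define z where "z = ld *\<^sub>R (d - a)"
  have xyz: "x + y + z = 0"
  proof -
    have "x + y + z = (lb *\<^sub>R b + lc *\<^sub>R c + ld *\<^sub>R d) - (lb + lc + ld) *\<^sub>R a"
      unfolding x_def y_def z_def by (simp add: algebra_simps)
    also have "lb + lc + ld = - la" using sum by simp
    also have "lb *\<^sub>R b + lc *\<^sub>R c + ld *\<^sub>R d = - la *\<^sub>R a" using e
      by (simp add: algebra_simps eq_neg_iff_add_eq_0)
    finally show ?thesis by simp
  qed
  have cxy: "x$1 * y$2 - x$2 * y$1 = lb * lc * det3 a b c"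
    unfolding x_def y_def by (simp add: det3_def algebra_simps)
  have cxz: "x$1 * z$2 - x$2 * z$1 = lb * ld * det3 a b d"
    unfolding x_def z_def by (simp add: det3_def algebra_simps)
  have cyz: "y$1 * z$2 - y$2 * z$1 = lc * ld * det3 a c d"
    unfolding y_def z_def by (simp add: det3_def algebra_simps)
  have t1: "norm z < norm x + norm y" by (rule tri_strict[OF xyz]) (use cxy nz nz' in simp)
  have t2: "norm y < norm x + norm z"
    by (rule tri_strict) (use xyz in \<open>simp add: algebra_simps\<close>, use cxz nz nz' in simp)
  have t3: "norm x < norm y + norm z"
    by (rule tri_strict) (use xyz in \<open>simp add: algebra_simps\<close>, use cyz nz nz' in simp)
  have nx: "norm x = \<bar>lb\<bar> * nb" "norm y = \<bar>lc\<bar> * nc" "norm z = \<bar>ld\<bar> * nd"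
    unfolding x_def y_def z_def nb_def nc_def nd_def by (simp_all add: norm_minus_commute)
  note SL = sign_lemma[OF nz'(2-4) npos, folded nx, OF t1 t2 t3]
  have hull_eq: "convex hull {a,b,c,d} = convex hull (insert a {b,c,d})" by simp
  show ?thesis
  proof (intro conjI impI)
    assume ex: "a extreme_point_of convex hull {a,b,c,d}"
    have "\<not> ((lb > 0 \<and> lc > 0 \<and> ld > 0) \<or> (lb < 0 \<and> lc < 0 \<and> ld < 0))"
    proof
      assume "(lb > 0 \<and> lc > 0 \<and> ld > 0) \<or> (lb < 0 \<and> lc < 0 \<and> ld < 0)"
      then have "a \<in> convex hull {b,c,d}" using G2 unfolding lb_def lc_def ld_def by blast
      then have "convex hull {a,b,c,d} = convex hull {b,c,d}" using hull_redundant by (metis hull_eq)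
      then have "a \<in> {b,c,d}" using ex extreme_point_of_convex_hull by metis
      then show False using dd by auto
    qed
    then show "\<alpha> > 0" unfolding al using SL(2) by blast
  next
    assume int: "a \<in> interior (convex hull {a,b,c,d})"
    have "(lb > 0 \<and> lc > 0 \<and> ld > 0) \<or> (lb < 0 \<and> lc < 0 \<and> ld < 0)"
    proof (rule ccontr)
      assume ns: "\<not> ((lb > 0 \<and> lc > 0 \<and> ld > 0) \<or> (lb < 0 \<and> lc < 0 \<and> ld < 0))"
      have "a \<notin> convex hull {b,c,d}"
      proof
        assume "a \<in> convex hull {b,c,d}"
        from G1[OF nz this] ns show False unfolding lb_def lc_def ld_def by blast
      qed
      then have "a extreme_point_of convex hull (insert a {b,c,d})"
        by (intro extreme_point_of_convex_hull_insert) auto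
      then have "a \<notin> interior (convex hull {a,b,c,d})" by (rule extreme_point_not_in_interior)
      then show False using int by simp
    qed
    then show "\<alpha> < 0" unfolding al using SL(1) by blast
  qed
qed

lemma wt_eq:
  assumes "{1..4} - {i, j} = {k, l}" "k < l"
  shows "wt p i j = 1 / (det3 (p i) (p j) (p k) * det3 (p i) (p j) (p l))"
proof -
  have "Min ({1..4} - {i, j}) = k" "Max ({1..4} - {i, j}) = l" using assms by auto
  then show ?thesis unfolding wt_def Let_def by simp
qed

lemma others2:
  fixes i j :: nat
  assumes "i \<in> {1..4}" "j \<in> {1..4}" "i \<noteq> j"
  obtains k l where "{1..4} - {i, j} = {k, l}" "k < l"
proof -
  have "card ({1..4::nat} - {i, j}) = 2" using assms by (simp add: card_Diff_subset)
  then obtain x y where xy: "{1..4} - {i, j} = {x, y}" "x \<noteq> y" by (auto simp: card_2_iff)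
  show ?thesis
  proof (cases "x < y")
    case True then show ?thesis using that xy by blast
  next
    case False then have "y < x" using xy by simp
    moreover have "{1..4} - {i, j} = {y, x}" using xy by auto
    ultimately show ?thesis using that by blast
  qed
qed

lemma wt_case:
  fixes a b c d :: "real^2"
  assumes nz: "det3 a b c \<noteq> 0" "det3 a b d \<noteq> 0" "det3 a c d \<noteq> 0" "det3 b c d \<noteq> 0"
  shows "(closed_segment a b face_of convex hull {a,b,c,d} \<longrightarrow> 1/(det3 a b c * det3 a b d) > 0)
    \<and> (\<not> closed_segment a b face_of convex hull {a,b,c,d} \<longrightarrow> 1/(det3 a b c * det3 a b d) < 0)"
proof -
  define P where "P = det3 a b c * det3 a b d"
  have P0: "P \<noteq> 0" using nz P_def by simp
  have F: "closed_segment a b face_of convex hull {a,b,c,d} \<longleftrightarrow> P > 0" using face_generic[OF nz] P_def by simp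
  have "\<not> P > 0 \<Longrightarrow> P < 0" using P0 by linarith
  then show ?thesis unfolding P_def[symmetric] F by simp
qed

theorem conj2:
  fixes p :: "nat \<Rightarrow> real^2"
  assumes nzp: "\<And>i j k. i\<in>{1..4} \<Longrightarrow> j\<in>{1..4} \<Longrightarrow> k\<in>{1..4} \<Longrightarrow> i \<noteq> j \<Longrightarrow> j \<noteq> k \<Longrightarrow> i \<noteq> k
     \<Longrightarrow> det3 (p i) (p j) (p k) \<noteq> 0"
    and ij: "i\<in>{1..4}" "j\<in>{1..4}" "i \<noteq> j"
  shows "(closed_segment (p i) (p j) face_of convex hull (p ` {1..4}) \<longrightarrow> wt p i j > 0)
        \<and> (\<not> closed_segment (p i) (p j) face_of convex hull (p ` {1..4}) \<longrightarrow> wt p i j < 0)"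
proof -
  obtain k l where kl: "{1..4} - {i, j} = {k, l}" "k < l" using others2[OF ij] by blast
  have w: "wt p i j = 1 / (det3 (p i) (p j) (p k) * det3 (p i) (p j) (p l))" by (rule wt_eq[OF kl])
  have "{1..4} = ({1..4} - {i,j}) \<union> {i,j}" using ij by blast
  then have U: "{1..4} = {i,j,k,l}" unfolding kl(1) by blast
  have kl': "k \<in> {1..4}" "l \<in> {1..4}" "k \<noteq> i" "k \<noteq> j" "l \<noteq> i" "l \<noteq> j"
  proof -
    have A: "k \<in> {1..4} - {i,j}" "l \<in> {1..4} - {i,j}" unfolding kl(1) by simp_all
    then show "k \<in> {1..4}" "l \<in> {1..4}" "k \<noteq> i" "k \<noteq> j" "l \<noteq> i" "l \<noteq> j" by blast+
  qed
  have im: "p ` {1..4} = {p i, p j, p k, p l}" by (subst U) simp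
  have "k \<noteq> l" using kl(2) by simp
  note facts = ij kl' this
  have n1: "det3 (p i) (p j) (p k) \<noteq> 0" by (rule nzp) (use facts in simp_all)
  have n2: "det3 (p i) (p j) (p l) \<noteq> 0" by (rule nzp) (use facts in simp_all)
  have n3: "det3 (p i) (p k) (p l) \<noteq> 0" by (rule nzp) (use facts in simp_all)
  have n4: "det3 (p j) (p k) (p l) \<noteq> 0" by (rule nzp) (use facts in simp_all)
  show ?thesis unfolding w im by (rule wt_case[OF n1 n2 n3 n4])
qed

lemma I4: "{1..4::nat} = {1,2,3,4}" by (auto simp: numeral_eq_Suc)

lemma E6: "{(i, j). i \<in> {1..4::nat} \<and> j \<in> {1..4} \<and> i < j} = {(1,2),(1,3),(1,4),(2,3),(2,4),(3,4)}"
  unfolding I4 by auto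

lemma alph_case:
  fixes p :: "nat \<Rightarrow> real^2"
  assumes R: "{1..4} - {i} = {b,c,d}" and bcd: "b < c" "c < d" and i: "i \<in> {1..4}"
    and nz: "det3 (p i) (p b) (p c) \<noteq> 0" "det3 (p i) (p b) (p d) \<noteq> 0" "det3 (p i) (p c) (p d) \<noteq> 0"
      "det3 (p b) (p c) (p d) \<noteq> 0"
  shows "(p i extreme_point_of convex hull (p ` {1..4}) \<longrightarrow> alph p i > 0)
        \<and> (p i \<in> interior (convex hull (p ` {1..4})) \<longrightarrow> alph p i < 0)"
proof -
  have ib: "i \<noteq> b" "i \<noteq> c" "i \<noteq> d"
  proof -
    have "b \<in> {1..4} - {i}" "c \<in> {1..4} - {i}" "d \<in> {1..4} - {i}" unfolding R by simp_all
    then show "i \<noteq> b" "i \<noteq> c" "i \<noteq> d" by blast+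
  qed
  have Rb: "{1..4} - {i, b} = {c, d}"
  proof -
    have "{1..4} - {i, b} = ({1..4} - {i}) - {b}" by blast
    also have "\<dots> = {c,d}" unfolding R using bcd by auto
    finally show ?thesis .
  qed
  have Rc: "{1..4} - {i, c} = {b, d}"
  proof -
    have "{1..4} - {i, c} = ({1..4} - {i}) - {c}" by blast
    also have "\<dots> = {b,d}" unfolding R using bcd by auto
    finally show ?thesis .
  qed
  have Rd: "{1..4} - {i, d} = {b, c}"
  proof -
    have "{1..4} - {i, d} = ({1..4} - {i}) - {d}" by blast
    also have "\<dots> = {b,c}" unfolding R using bcd by auto
    finally show ?thesis .
  qed
  have "alph p i = (\<Sum>j\<in>{b,c,d}. wt p i j * norm (p i - p j))" unfolding alph_def R ..
  also have "\<dots> = wt p i b * norm (p i - p b) + wt p i c * norm (p i - p c) + wt p i d * norm (p i - p d)"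
    using bcd by simp
  also have "\<dots> = 1/(det3 (p i) (p b) (p c) * det3 (p i) (p b) (p d)) * norm (p i - p b)
     + 1/(det3 (p i) (p c) (p b) * det3 (p i) (p c) (p d)) * norm (p i - p c)
     + 1/(det3 (p i) (p d) (p b) * det3 (p i) (p d) (p c)) * norm (p i - p d)"
    using wt_eq[OF Rb, of p] wt_eq[OF Rc, of p] wt_eq[OF Rd, of p] bcd by simp
  finally have al: "alph p i = \<dots>" .
  have "{1..4} = insert i ({1..4} - {i})" using i by blast
  then have U: "{1..4} = {i,b,c,d}" unfolding R .
  have im: "p ` {1..4} = {p i, p b, p c, p d}" by (subst U) simp
  show ?thesis unfolding al im by (rule alpha_generic[OF nz])
qed

lemma alph_exp:
  assumes R: "{1..4} - {i} = {b,c,d}" and bcd: "b < c" "c < d"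
  shows "alph p i = wt p i b * norm (p i - p b) + wt p i c * norm (p i - p c) + wt p i d * norm (p i - p d)"
proof -
  have "alph p i = (\<Sum>j\<in>{b,c,d}. wt p i j * norm (p i - p j))" unfolding alph_def R ..
  also have "\<dots> = wt p i b * norm (p i - p b) + wt p i c * norm (p i - p c) + wt p i d * norm (p i - p d)"
    using bcd by simp
  finally show ?thesis .
qed

lemma wt_sym: "wt p j i = wt p i j"
proof -
  have s: "{j,i} = {i,j}" by blast
  have d: "\<And>x. det3 (p j) (p i) x = - det3 (p i) (p j) x" by (simp add: det3_def algebra_simps)
  show ?thesis unfolding wt_def Let_def s d by simp
qed

lemma stress_part:
  fixes p :: "nat \<Rightarrow> real^2"
  assumes nz: "det3 (p 1) (p 2) (p 3) \<noteq> 0" "det3 (p 1) (p 2) (p 4) \<noteq> 0" "det3 (p 1) (p 3) (p 4) \<noteq> 0"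
      "det3 (p 2) (p 3) (p 4) \<noteq> 0"
  shows "is_stress {(i, j). i \<in> {1..4} \<and> j \<in> {1..4} \<and> i < j} {1..4} p (wt p) (alph p)"
  unfolding is_stress_def
proof (intro allI)
  fix v :: "nat \<Rightarrow> real^2" and t :: "nat \<Rightarrow> real"
  have W: "wt p 1 2 = 1/(det3 (p 1) (p 2) (p 3) * det3 (p 1) (p 2) (p 4))"
    "wt p 1 3 = 1/(det3 (p 1) (p 3) (p 2) * det3 (p 1) (p 3) (p 4))"
    "wt p 1 4 = 1/(det3 (p 1) (p 4) (p 2) * det3 (p 1) (p 4) (p 3))"
    "wt p 2 3 = 1/(det3 (p 2) (p 3) (p 1) * det3 (p 2) (p 3) (p 4))"
    "wt p 2 4 = 1/(det3 (p 2) (p 4) (p 1) * det3 (p 2) (p 4) (p 3))"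
    "wt p 3 4 = 1/(det3 (p 3) (p 4) (p 1) * det3 (p 3) (p 4) (p 2))"
    by (rule wt_eq, unfold I4, auto)+
  have A: "alph p 1 = wt p 1 2 * norm (p 1 - p 2) + wt p 1 3 * norm (p 1 - p 3) + wt p 1 4 * norm (p 1 - p 4)"
    "alph p 2 = wt p 1 2 * norm (p 2 - p 1) + wt p 2 3 * norm (p 2 - p 3) + wt p 2 4 * norm (p 2 - p 4)"
    "alph p 3 = wt p 1 3 * norm (p 3 - p 1) + wt p 2 3 * norm (p 3 - p 2) + wt p 3 4 * norm (p 3 - p 4)"
    "alph p 4 = wt p 1 4 * norm (p 4 - p 1) + wt p 2 4 * norm (p 4 - p 2) + wt p 3 4 * norm (p 4 - p 3)"
    using alph_exp[of 1 2 3 4 p] alph_exp[of 2 1 3 4 p] alph_exp[of 3 1 2 4 p] alph_exp[of 4 1 2 3 p]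
      wt_sym[of p 2 1] wt_sym[of p 3 1] wt_sym[of p 3 2] wt_sym[of p 4 1] wt_sym[of p 4 2] wt_sym[of p 4 3]
    unfolding I4 by (simp_all add: insert_Diff_if)
  note G = stress_generic[where a="p 1" and b="p 2" and c="p 3" and d="p 4" and va="v 1" and vb="v 2"
      and vc="v 3" and vd="v 4" and ta="t 1" and tb="t 2" and tc="t 3" and td="t 4", OF nz, folded W]
  have S1: "(\<Sum>(i,j)\<in>{(i, j). i \<in> {1..4::nat} \<and> j \<in> {1..4} \<and> i < j}.
      wt p i j * (inner (p i - p j) (v i - v j) - norm (p i - p j) * (t i + t j)))
    = wt p 1 2 * (inner (p 1 - p 2) (v 1 - v 2) - norm (p 1 - p 2) * (t 1 + t 2))
    + wt p 1 3 * (inner (p 1 - p 3) (v 1 - v 3) - norm (p 1 - p 3) * (t 1 + t 3))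
    + wt p 1 4 * (inner (p 1 - p 4) (v 1 - v 4) - norm (p 1 - p 4) * (t 1 + t 4))
    + wt p 2 3 * (inner (p 2 - p 3) (v 2 - v 3) - norm (p 2 - p 3) * (t 2 + t 3))
    + wt p 2 4 * (inner (p 2 - p 4) (v 2 - v 4) - norm (p 2 - p 4) * (t 2 + t 4))
    + wt p 3 4 * (inner (p 3 - p 4) (v 3 - v 4) - norm (p 3 - p 4) * (t 3 + t 4))"
    unfolding E6 by (simp add: add.assoc)
  have S2: "(\<Sum>i\<in>{1..4::nat}. alph p i * t i) = alph p 1 * t 1 + alph p 2 * t 2 + alph p 3 * t 3 + alph p 4 * t 4"
    unfolding I4 by (simp add: add.assoc)
  show "(\<Sum>(i,j)\<in>{(i, j). i \<in> {1..4} \<and> j \<in> {1..4} \<and> i < j}.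
      wt p i j * (inner (p i - p j) (v i - v j) - norm (p i - p j) * (t i + t j)))
    + (\<Sum>i\<in>{1..4}. alph p i * t i) = 0"
    unfolding S1 S2 A using G by (simp add: add.assoc)
qed

theorem mainTheorem16:
  fixes p :: "nat \<Rightarrow> real^2"
  assumes gp: "\<forall>i\<in>{1..4}. \<forall>j\<in>{1..4}. \<forall>k\<in>{1..4}.
                 i \<noteq> j \<and> j \<noteq> k \<and> i \<noteq> k \<longrightarrow> \<not> collinear {p i, p j, p k}"
  shows "is_stress {(i, j). i \<in> {1..4} \<and> j \<in> {1..4} \<and> i < j} {1..4} p (wt p) (alph p)
    \<and> (\<forall>i\<in>{1..4}. \<forall>j\<in>{1..4}. i \<noteq> j \<longrightarrow>
          (closed_segment (p i) (p j) face_of convex hull (p ` {1..4}) \<longrightarrow> wt p i j > 0)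
        \<and> (\<not> closed_segment (p i) (p j) face_of convex hull (p ` {1..4}) \<longrightarrow> wt p i j < 0))
    \<and> (\<forall>i\<in>{1..4}.
          (p i extreme_point_of convex hull (p ` {1..4}) \<longrightarrow> alph p i > 0)
        \<and> (p i \<in> interior (convex hull (p ` {1..4})) \<longrightarrow> alph p i < 0))"
proof -
  have nzp: "det3 (p i) (p j) (p k) \<noteq> 0"
    if "i\<in>{1..4}" "j\<in>{1..4}" "k\<in>{1..4}" "i \<noteq> j" "j \<noteq> k" "i \<noteq> k" for i j k
  proof
    assume "det3 (p i) (p j) (p k) = 0"
    then have "collinear {p i, p j, p k}" by (rule det3_collinear)
    moreover have "\<not> collinear {p i, p j, p k}" using gp that by blast
    ultimately show False by contradiction
  qed
  have n: "det3 (p 1) (p 2) (p 3) \<noteq> 0" "det3 (p 1) (p 2) (p 4) \<noteq> 0" "det3 (p 1) (p 3) (p 4) \<noteq> 0"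
      "det3 (p 2) (p 3) (p 4) \<noteq> 0" by (rule nzp; simp)+
  have n2: "det3 (p 2) (p 1) (p 3) \<noteq> 0" "det3 (p 2) (p 1) (p 4) \<noteq> 0"
    "det3 (p 3) (p 1) (p 2) \<noteq> 0" "det3 (p 3) (p 1) (p 4) \<noteq> 0" "det3 (p 3) (p 2) (p 4) \<noteq> 0"
    "det3 (p 4) (p 1) (p 2) \<noteq> 0" "det3 (p 4) (p 1) (p 3) \<noteq> 0" "det3 (p 4) (p 2) (p 3) \<noteq> 0"
    by (rule nzp; simp)+
  have c3: "(p i extreme_point_of convex hull (p ` {1..4}) \<longrightarrow> alph p i > 0)
        \<and> (p i \<in> interior (convex hull (p ` {1..4})) \<longrightarrow> alph p i < 0)" if i: "i \<in> {1..4}" for i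
  proof -
    have "i = 1 \<or> i = 2 \<or> i = 3 \<or> i = 4" using i unfolding I4 by blast
    then show ?thesis
    proof (elim disjE)
      assume "i = 1"
      then show ?thesis using alph_case[of 1 2 3 4 p] n n2 unfolding I4 by (simp add: insert_Diff_if)
    next
      assume "i = 2"
      then show ?thesis using alph_case[of 2 1 3 4 p] n n2 unfolding I4 by (simp add: insert_Diff_if)
    next
      assume "i = 3"
      then show ?thesis using alph_case[of 3 1 2 4 p] n n2 unfolding I4 by (simp add: insert_Diff_if)
    next
      assume "i = 4"
      then show ?thesis using alph_case[of 4 1 2 3 p] n n2 unfolding I4 by (simp add: insert_Diff_if)
    qed
  qed
  show ?thesis
  proof (intro conjI ballI impI)
    show "is_stress {(i, j). i \<in> {1..4} \<and> j \<in> {1..4} \<and> i < j} {1..4} p (wt p) (alph p)"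
      by (rule stress_part[OF n])
  next
    fix i j :: nat assume "i \<in> {1..4}" "j \<in> {1..4}" "i \<noteq> j"
    note C = conj2[of p i j, OF nzp this]
    show "closed_segment (p i) (p j) face_of convex hull (p ` {1..4}) \<Longrightarrow> wt p i j > 0" using C by blast
    show "\<not> closed_segment (p i) (p j) face_of convex hull (p ` {1..4}) \<Longrightarrow> wt p i j < 0" using C by blast
  next
    fix i :: nat assume "i \<in> {1..4}"
    note C = c3[OF this]
    show "p i extreme_point_of convex hull (p ` {1..4}) \<Longrightarrow> alph p i > 0" using C by blast
    show "p i \<in> interior (convex hull (p ` {1..4})) \<Longrightarrow> alph p i < 0" using C by blast
  qed
qed

end
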